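(* Let $n>2$ and $1<p<\infty$. Let $\Delta_n=\{\mathbf{s}\in\mathbb{R}^n: s_i\ge0\ \forall i,\ \sum_i s_i=1\}$ and for $\mathbf{s}\in\Delta_n$ let $M(\mathbf{s})=\operatorname{Diag}(\mathbf{s})-\mathbf{s}\mathbf{s}^\top\in\mathbb{R}^{n\times n}$. Then for $\mathbf{s}\in\Delta_n$, $\|M(\mathbf{s})\|_p=\tfrac12$ if and only if $\mathbf{s}$ is a coordinate permutation of $(1/2,1/2,0,\dots,0)$.
   Context: For $p\in[1,\infty)$, $\|\mathbf{x}\|_p=(\sum_i|x_i|^p)^{1/p}$; for a square matrix $A$, $\|A\|_p=\sup_{\mathbf{v}\ne0}\|A\mathbf{v}\|_p/\|\mathbf{v}\|_p$ is the induced operator norm. $\operatorname{Diag}(\mathbf{s})$ is the diagonal matrix with diagonal $\mathbf{s}$. *)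

theory Defs
  imports "HOL-Analysis.Analysis"
begin

definition pnorm :: "real \<Rightarrow> real^'n \<Rightarrow> real" where
  "pnorm p x = (\<Sum>i\<in>UNIV. \<bar>x $ i\<bar> powr p) powr (1 / p)"

definition op_pnorm :: "real \<Rightarrow> real^'n^'n \<Rightarrow> real" where
  "op_pnorm p A = Sup {pnorm p (A *v v) / pnorm p v | v. v \<noteq> 0}"

definition prob_simplex :: "(real^'n) set" where
  "prob_simplex = {s. (\<forall>i. s $ i \<ge> 0) \<and> (\<Sum>i\<in>UNIV. s $ i) = 1}"

definition Diag :: "real^'n \<Rightarrow> real^'n^'n" where
  "Diag s = (\<chi> i j. if i = j then s $ i else 0)"

definition Mmat :: "real^'n \<Rightarrow> real^'n^'n" where
  "Mmat s = Diag s - (\<chi> i j. s $ i * s $ j)"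

end

theory Submission
  imports Defs
begin

lemma powr_convex0:
  assumes "p \<ge> 1" shows "convex_on {0..} (\<lambda>x::real. x powr p)"
proof (rule convex_onI)
  show "convex {0::real..}" by simp
  fix t x y :: real
  assume t: "0 < t" "t < 1" and x: "x \<in> {0..}" and y: "y \<in> {0..}"
  show "((1 - t) *\<^sub>R x + t *\<^sub>R y) powr p \<le> (1 - t) * x powr p + t * y powr p"
  proof (cases "x = 0 \<or> y = 0")
    case False
    then have "x \<in> {0<..}" "y \<in> {0<..}" using x y by auto
    then show ?thesis using convex_onD[OF powr_convex[OF assms], of t x y] t by simp
  next
    case True
    have a: "t powr p \<le> t" using powr_le_one_le[of t p] t assms by simp
    have b: "(1-t) powr p \<le> 1-t" using powr_le_one_le[of "1-t" p] t assms by simp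
    show ?thesis
    proof (cases "x = 0")
      case True
      then have "((1 - t) *\<^sub>R x + t *\<^sub>R y) powr p = t powr p * y powr p"
        using t y by (simp add: powr_mult)
      also have "\<dots> \<le> t * y powr p" using a by (intro mult_right_mono) auto
      finally show ?thesis using True assms by simp
    next
      case False
      then have y0: "y = 0" using True by auto
      then have "((1 - t) *\<^sub>R x + t *\<^sub>R y) powr p = (1-t) powr p * x powr p"
        using t x by (simp add: powr_mult)
      also have "\<dots> \<le> (1-t) * x powr p" using b by (intro mult_right_mono) auto
      finally show ?thesis using y0 assms by simp
    qed
  qed
qed

lemma jensen_pow:
  fixes a x :: "'i \<Rightarrow> real"
  assumes "finite I" "\<And>i. i \<in> I \<Longrightarrow> a i \<ge> 0" "p \<ge> 1"
  shows "(\<Sum>i\<in>I. a i * \<bar>x i\<bar>) powr p \<le> (\<Sum>i\<in>I. a i) powr (p - 1) * (\<Sum>i\<in>I. a i * \<bar>x i\<bar> powr p)"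
proof (cases "(\<Sum>i\<in>I. a i) = 0")
  case True
  then have "\<forall>i\<in>I. a i = 0" using assms sum_nonneg_eq_0_iff by blast
  then show ?thesis by simp
next
  case False
  define A where "A = (\<Sum>i\<in>I. a i)"
  have A0: "A > 0" using False assms sum_nonneg[of I a] unfolding A_def by force
  have ne: "I \<noteq> {}" using False by auto
  have "((\<Sum>i\<in>I. (a i / A) *\<^sub>R \<bar>x i\<bar>)) powr p \<le> (\<Sum>i\<in>I. (a i / A) * \<bar>x i\<bar> powr p)"
    apply (rule convex_on_sum[OF assms(1) ne powr_convex0[OF assms(3)]])
    using A0 assms(2) by (auto simp: A_def sum_divide_distrib[symmetric])
  then have h: "((\<Sum>i\<in>I. a i * \<bar>x i\<bar>) / A) powr p \<le> (\<Sum>i\<in>I. a i * \<bar>x i\<bar> powr p) / A"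
    by (simp add: sum_divide_distrib)
  have nn: "(\<Sum>i\<in>I. a i * \<bar>x i\<bar>) \<ge> 0" using assms by (intro sum_nonneg) auto
  have "(\<Sum>i\<in>I. a i * \<bar>x i\<bar>) powr p = A powr p * ((\<Sum>i\<in>I. a i * \<bar>x i\<bar>) / A) powr p"
    using A0 nn by (simp add: powr_divide)
  also have "\<dots> \<le> A powr p * ((\<Sum>i\<in>I. a i * \<bar>x i\<bar> powr p) / A)"
    using h by (intro mult_left_mono) auto
  also have "\<dots> = A powr (p - 1) * (\<Sum>i\<in>I. a i * \<bar>x i\<bar> powr p)"
    using A0 by (simp add: powr_diff)
  finally show ?thesis unfolding A_def .
qed

lemma two_pow:
  fixes x y p :: real
  assumes "p \<ge> 1"
  shows "\<bar>x - y\<bar> powr p \<le> 2 powr (p - 1) * (\<bar>x\<bar> powr p + \<bar>y\<bar> powr p)"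
proof -
  have "\<bar>x - y\<bar> powr p \<le> (\<bar>x\<bar> + \<bar>y\<bar>) powr p"
    using assms by (intro powr_mono2) auto
  also have "\<dots> \<le> 2 powr (p - 1) * (\<bar>x\<bar> powr p + \<bar>y\<bar> powr p)"
    using jensen_pow[where I="{True, False}" and a="\<lambda>_. 1" and x="\<lambda>b. if b then x else y" and p=p] assms by simp
  finally show ?thesis .
qed


lemma Mv2:
  "(Mmat s *v v) $ k = s$k * v$k - s$k * (\<Sum>l\<in>UNIV. s$l * v$l)"
proof -
  have "(Mmat s *v v) $ k = (\<Sum>l\<in>UNIV. (if k = l then s$k * v$l else 0) - s$k * (s$l * v$l))"
    unfolding Mmat_def Diag_def matrix_vector_mult_def
    by (simp, intro sum.cong) (auto simp: algebra_simps)
  also have "\<dots> = s$k * v$k - s$k * (\<Sum>l\<in>UNIV. s$l * v$l)"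
    by (simp add: sum_subtractf sum_distrib_left)
  finally show ?thesis .
qed

definition aa :: "real^'n \<Rightarrow> 'n \<Rightarrow> 'n \<Rightarrow> real" where
  "aa s i j = (if i = j then 0 else s$i * s$j)"

lemma Mv_aa:
  assumes "s \<in> prob_simplex"
  shows "(Mmat s *v v) $ k = (\<Sum>j\<in>UNIV. aa s k j * (v$k - v$j))"
proof -
  have "(\<Sum>j\<in>UNIV. aa s k j * (v$k - v$j)) = (\<Sum>j\<in>UNIV. s$k * v$k * s$j - s$k * (s$j * v$j))"
    by (intro sum.cong) (auto simp: aa_def algebra_simps)
  also have "\<dots> = s$k * v$k * (\<Sum>j\<in>UNIV. s$j) - s$k * (\<Sum>j\<in>UNIV. s$j * v$j)"
    by (simp add: sum_subtractf sum_distrib_left)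
  also have "\<dots> = (Mmat s *v v) $ k"
    using assms by (simp add: prob_simplex_def Mv2)
  finally show ?thesis by simp
qed

lemma aa_sum:
  assumes "s \<in> prob_simplex"
  shows "(\<Sum>j\<in>UNIV. aa s k j) = s$k * (1 - s$k)"
proof -
  have "(\<Sum>j\<in>UNIV. aa s k j) = (\<Sum>j\<in>UNIV. s$k * s$j - (if k = j then s$k * s$k else 0))"
    by (intro sum.cong) (auto simp: aa_def)
  also have "\<dots> = s$k * (\<Sum>j\<in>UNIV. s$j) - s$k * s$k"
    by (simp add: sum_subtractf sum_distrib_left)
  finally show ?thesis using assms by (simp add: prob_simplex_def algebra_simps)
qed

lemma aa_sym: "aa s i j = aa s j i" by (simp add: aa_def mult.commute)

lemma aa_nn: "s \<in> prob_simplex \<Longrightarrow> aa s i j \<ge> 0"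
  by (simp add: aa_def prob_simplex_def)


definition AA :: "real^'n \<Rightarrow> 'n \<Rightarrow> real" where "AA s k = s$k * (1 - s$k)"
definition EE :: "real^'n \<Rightarrow> real \<Rightarrow> 'n \<Rightarrow> real" where "EE s p k = AA s k powr (p - 1)"
definition BB :: "real^'n \<Rightarrow> real \<Rightarrow> 'n \<Rightarrow> real" where
  "BB s p k = 2 powr (p - 1) * (EE s p k * AA s k + (\<Sum>i\<in>UNIV. EE s p i * aa s i k))"

lemma rearr:
  fixes E g :: "'n::finite \<Rightarrow> real" and a :: "'n \<Rightarrow> 'n \<Rightarrow> real"
  shows "(\<Sum>i\<in>UNIV. E i * (\<Sum>j\<in>UNIV. a i j * (c * (g i + g j))))
    = (\<Sum>k\<in>UNIV. c * (E k * (\<Sum>j\<in>UNIV. a k j) + (\<Sum>i\<in>UNIV. E i * a i k)) * g k)"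
proof -
  have "(\<Sum>i\<in>UNIV. E i * (\<Sum>j\<in>UNIV. a i j * (c * (g i + g j))))
     = (\<Sum>i\<in>UNIV. c * (E i * (\<Sum>j\<in>UNIV. a i j)) * g i) + (\<Sum>i\<in>UNIV. \<Sum>j\<in>UNIV. c * E i * a i j * g j)"
    by (simp add: sum_distrib_left sum_distrib_right sum.distrib algebra_simps)
  also have "(\<Sum>i\<in>UNIV. \<Sum>j\<in>UNIV. c * E i * a i j * g j) = (\<Sum>j\<in>UNIV. c * (\<Sum>i\<in>UNIV. E i * a i j) * g j)"
    by (subst sum.swap) (simp add: sum_distrib_left sum_distrib_right algebra_simps)
  finally show ?thesis by (simp add: sum.distrib[symmetric] algebra_simps)
qed

lemma main_sum:
  assumes "s \<in> prob_simplex" "p \<ge> 1"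
  shows "(\<Sum>k\<in>UNIV. \<bar>(Mmat s *v v) $ k\<bar> powr p) \<le> (\<Sum>k\<in>UNIV. BB s p k * \<bar>v$k\<bar> powr p)"
proof -
  have step: "\<bar>(Mmat s *v v) $ i\<bar> powr p \<le>
      EE s p i * (\<Sum>j\<in>UNIV. aa s i j * (2 powr (p - 1) * (\<bar>v$i\<bar> powr p + \<bar>v$j\<bar> powr p)))" for i
  proof -
    have "\<bar>(Mmat s *v v) $ i\<bar> \<le> (\<Sum>j\<in>UNIV. aa s i j * \<bar>v$i - v$j\<bar>)"
      unfolding Mv_aa[OF assms(1)]
      by (rule order_trans[OF sum_abs]) (simp add: abs_mult aa_nn[OF assms(1)])
    then have "\<bar>(Mmat s *v v) $ i\<bar> powr p \<le> (\<Sum>j\<in>UNIV. aa s i j * \<bar>v$i - v$j\<bar>) powr p"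
      using assms by (intro powr_mono2) auto
    also have "\<dots> \<le> (\<Sum>j\<in>UNIV. aa s i j) powr (p - 1) * (\<Sum>j\<in>UNIV. aa s i j * \<bar>v$i - v$j\<bar> powr p)"
      using jensen_pow[where I=UNIV and a="aa s i" and x="\<lambda>j. v$i - v$j" and p=p] assms aa_nn
      by auto
    also have "\<dots> \<le> EE s p i * (\<Sum>j\<in>UNIV. aa s i j * (2 powr (p - 1) * (\<bar>v$i\<bar> powr p + \<bar>v$j\<bar> powr p)))"
      unfolding EE_def AA_def aa_sum[OF assms(1)]
      by (intro mult_left_mono sum_mono two_pow assms(2)) (auto simp: aa_nn[OF assms(1)])
    finally show ?thesis .
  qed
  have "(\<Sum>k\<in>UNIV. \<bar>(Mmat s *v v) $ k\<bar> powr p) \<le>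
     (\<Sum>i\<in>UNIV. EE s p i * (\<Sum>j\<in>UNIV. aa s i j * (2 powr (p - 1) * (\<bar>v$i\<bar> powr p + \<bar>v$j\<bar> powr p))))"
    by (intro sum_mono step)
  also have "\<dots> = (\<Sum>k\<in>UNIV. BB s p k * \<bar>v$k\<bar> powr p)"
    unfolding rearr BB_def aa_sum[OF assms(1)] AA_def by simp
  finally show ?thesis .
qed


lemma s_bounds: "s \<in> prob_simplex \<Longrightarrow> 0 \<le> s$k \<and> s$k \<le> 1"
proof -
  assume s: "s \<in> prob_simplex"
  then have "s$k \<le> (\<Sum>i\<in>UNIV. s$i)"
    by (intro member_le_sum) (auto simp: prob_simplex_def)
  then show ?thesis using s by (auto simp: prob_simplex_def)
qed

lemma AA_bounds:
  assumes "s \<in> prob_simplex"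
  shows "0 \<le> AA s k" "AA s k \<le> 1/4" "s$k \<noteq> 1/2 \<Longrightarrow> AA s k < 1/4"
proof -
  have e: "AA s k = 1/4 - (s$k - 1/2)^2" by (simp add: AA_def power2_eq_square algebra_simps)
  show "0 \<le> AA s k" using s_bounds[OF assms, of k] by (simp add: AA_def)
  show "AA s k \<le> 1/4" unfolding e by simp
  show "s$k \<noteq> 1/2 \<Longrightarrow> AA s k < 1/4" unfolding e by simp
qed

lemma EE_bounds:
  assumes "s \<in> prob_simplex" "p > 1"
  shows "0 \<le> EE s p k" "EE s p k \<le> (1/4) powr (p - 1)" "s$k \<noteq> 1/2 \<Longrightarrow> EE s p k < (1/4) powr (p - 1)"
  using AA_bounds[OF assms(1), of k] assms(2) unfolding EE_def
  by (auto intro!: powr_mono2 powr_less_mono2)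

lemma F_eq: "(1/4::real) powr (p - 1) = 1 / (2 powr (p - 1) * 2 powr (p - 1))"
proof -
  have "(4::real) powr (p - 1) = 2 powr (p - 1) * 2 powr (p - 1)"
    using powr_mult[of 2 2 "p - 1"] by simp
  then show ?thesis by (simp add: powr_divide)
qed

lemma half_eq: "(2::real) powr (- p) = 1 / (2 * 2 powr (p - 1))"
proof -
  have "(2::real) powr p = 2 * 2 powr (p - 1)"
    using powr_mult_base[of 2 "p - 1"] by simp
  then show ?thesis by (simp only: powr_minus_divide)
qed

lemma BB_le:
  assumes "s \<in> prob_simplex" "p > 1"
  shows "BB s p k \<le> 2 powr (- p)" "0 \<le> BB s p k"
proof -
  define F where "F = (1/4::real) powr (p - 1)"
  have F0: "F > 0" unfolding F_def by simp
  have t1: "EE s p k * AA s k \<le> F * (1/4)"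
    using EE_bounds[OF assms, of k] AA_bounds[OF assms(1), of k] unfolding F_def
    by (intro mult_mono) auto
  have "(\<Sum>i\<in>UNIV. EE s p i * aa s i k) \<le> (\<Sum>i\<in>UNIV. F * aa s i k)"
    using EE_bounds[OF assms] aa_nn[OF assms(1)] unfolding F_def
    by (intro sum_mono mult_right_mono) auto
  also have "\<dots> = F * AA s k"
    by (simp add: sum_distrib_left[symmetric] aa_sym[of s _ k] aa_sum[OF assms(1)] AA_def)
  also have "\<dots> \<le> F * (1/4)" using F0 AA_bounds[OF assms(1), of k] by simp
  finally have t2: "(\<Sum>i\<in>UNIV. EE s p i * aa s i k) \<le> F * (1/4)" .
  have "BB s p k \<le> 2 powr (p - 1) * (F / 2)"
    unfolding BB_def using t1 t2 by (intro mult_left_mono) auto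
  also have "\<dots> = 2 powr (- p)" unfolding F_def F_eq half_eq by (simp add: field_simps)
  finally show "BB s p k \<le> 2 powr (- p)" .
  show "0 \<le> BB s p k" unfolding BB_def
    using EE_bounds[OF assms] AA_bounds[OF assms(1)] aa_nn[OF assms(1)]
    by (intro mult_nonneg_nonneg add_nonneg_nonneg sum_nonneg) auto
qed


definition special :: "real^'n \<Rightarrow> bool" where
  "special s = (\<exists>i j. i \<noteq> j \<and> s $ i = 1/2 \<and> s $ j = 1/2 \<and> (\<forall>k. k \<noteq> i \<and> k \<noteq> j \<longrightarrow> s $ k = 0))"

lemma exists_other:
  assumes s: "s \<in> prob_simplex" and sk: "s$k = 1/2" and ns: "\<not> special s"
  shows "\<exists>i. i \<noteq> k \<and> 0 < s$i \<and> s$i \<noteq> 1/2"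
proof (rule ccontr)
  assume "\<not> ?thesis"
  then have H: "\<And>i. i \<noteq> k \<Longrightarrow> s$i = 0 \<or> s$i = 1/2"
    using s_bounds[OF s] by (metis less_eq_real_def)
  have tot: "(\<Sum>i\<in>UNIV. s$i) = 1" using s by (simp add: prob_simplex_def)
  have split: "(\<Sum>i\<in>UNIV. s$i) = s$k + (\<Sum>i\<in>UNIV - {k}. s$i)"
    by (simp add: sum.remove)
  have "\<exists>j. j \<noteq> k \<and> s$j = 1/2"
  proof (rule ccontr)
    assume "\<not> ?thesis"
    then have "\<forall>i\<in>UNIV - {k}. s$i = 0" using H by auto
    then have "(\<Sum>i\<in>UNIV - {k}. s$i) = 0" by simp
    then show False using tot split sk by linarith
  qed
  then obtain j where j: "j \<noteq> k" "s$j = 1/2" by auto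
  have "\<forall>l. l \<noteq> k \<and> l \<noteq> j \<longrightarrow> s$l = 0"
  proof (intro allI impI)
    fix l assume l: "l \<noteq> k \<and> l \<noteq> j"
    show "s$l = 0"
    proof (rule ccontr)
      assume "s$l \<noteq> 0"
      then have sl: "s$l = 1/2" using H l by auto
      have le: "(\<Sum>i\<in>{k,j,l}. s$i) \<le> (\<Sum>i\<in>UNIV. s$i)"
        using s by (intro sum_mono2) (auto simp: prob_simplex_def)
      have d: "k \<noteq> j" "k \<noteq> l" "j \<noteq> l" using j(1) l by auto
      have "(\<Sum>i\<in>{k,j,l}. s$i) = s$k + s$j + s$l" using d by (simp add: add.assoc)
      then show False using le tot sk sl j(2) by linarith
    qed
  qed
  then have "special s" unfolding special_def using sk j by blast
  then show False using ns by simp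
qed

lemma BB_lt:
  assumes "s \<in> prob_simplex" "p > 1" "\<not> special s"
  shows "BB s p k < 2 powr (- p)"
proof -
  define F where "F = (1/4::real) powr (p - 1)"
  have F0: "F > 0" unfolding F_def by simp
  have t1: "EE s p k * AA s k \<le> F * AA s k"
    using EE_bounds[OF assms(1,2), of k] AA_bounds[OF assms(1), of k] unfolding F_def
    by (intro mult_right_mono) auto
  have t2a: "(\<Sum>i\<in>UNIV. EE s p i * aa s i k) \<le> (\<Sum>i\<in>UNIV. F * aa s i k)"
    using EE_bounds[OF assms(1,2)] aa_nn[OF assms(1)] unfolding F_def
    by (intro sum_mono mult_right_mono) auto
  have t2b: "(\<Sum>i\<in>UNIV. F * aa s i k) = F * AA s k"
    by (simp add: sum_distrib_left[symmetric] aa_sym[of s _ k] aa_sum[OF assms(1)] AA_def)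
  have "EE s p k * AA s k + (\<Sum>i\<in>UNIV. EE s p i * aa s i k) < F / 2"
  proof (cases "s$k = 1/2")
    case False
    then have "F * AA s k < F * (1/4)" using F0 AA_bounds[OF assms(1), of k] by simp
    then show ?thesis using t1 t2a t2b by simp
  next
    case True
    obtain i where i: "i \<noteq> k" "0 < s$i" "s$i \<noteq> 1/2"
      using exists_other[OF assms(1) True assms(3)] by auto
    have "(\<Sum>i\<in>UNIV. EE s p i * aa s i k) < (\<Sum>i\<in>UNIV. F * aa s i k)"
    proof (rule sum_strict_mono_ex1)
      show "\<forall>x\<in>UNIV. EE s p x * aa s x k \<le> F * aa s x k"
        using EE_bounds[OF assms(1,2)] aa_nn[OF assms(1)] unfolding F_def
        by (auto intro: mult_right_mono)
      have "aa s i k > 0" using i True by (simp add: aa_def)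
      moreover have "EE s p i < F" using EE_bounds(3)[OF assms(1,2) i(3)] unfolding F_def .
      ultimately show "\<exists>a\<in>UNIV. EE s p a * aa s a k < F * aa s a k" by (intro bexI[of _ i]) auto
    qed (simp)
    moreover have A4: "AA s k = 1/4" unfolding AA_def True by simp
    ultimately show ?thesis using t1 t2b unfolding A4 by linarith
  qed
  then have "BB s p k < 2 powr (p - 1) * (F / 2)"
    unfolding BB_def by (intro mult_strict_left_mono) auto
  also have "\<dots> = 2 powr (- p)" unfolding F_def F_eq half_eq by (simp add: field_simps)
  finally show ?thesis .
qed


lemma pnorm_pos:
  assumes "v \<noteq> 0" "p > 0"
  shows "pnorm p v > 0"
proof -
  obtain i where i: "v$i \<noteq> 0" using assms(1) by (auto simp: vec_eq_iff)
  have "\<bar>v$i\<bar> powr p \<le> (\<Sum>j\<in>UNIV. \<bar>v$j\<bar> powr p)"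
    by (intro member_le_sum) auto
  moreover have "\<bar>v$i\<bar> powr p > 0" using i by simp
  ultimately have "(\<Sum>j\<in>UNIV. \<bar>v$j\<bar> powr p) > 0" by linarith
  then show ?thesis unfolding pnorm_def by simp
qed

lemma pnorm_scale:
  assumes "p > 0"
  shows "pnorm p (c *\<^sub>R v) = \<bar>c\<bar> * pnorm p v"
proof -
  have "(\<Sum>j\<in>UNIV. \<bar>(c *\<^sub>R v)$j\<bar> powr p) = \<bar>c\<bar> powr p * (\<Sum>j\<in>UNIV. \<bar>v$j\<bar> powr p)"
    by (simp add: abs_mult powr_mult sum_distrib_left)
  then have "pnorm p (c *\<^sub>R v) = (\<bar>c\<bar> powr p) powr (1/p) * (\<Sum>j\<in>UNIV. \<bar>v$j\<bar> powr p) powr (1/p)"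
    unfolding pnorm_def by (simp add: powr_mult sum_nonneg)
  also have "(\<bar>c\<bar> powr p) powr (1/p) = \<bar>c\<bar>" using assms by (simp add: powr_powr)
  finally show ?thesis unfolding pnorm_def .
qed

lemma ratio_bound:
  assumes s: "s \<in> prob_simplex" and p: "p > 1" and C: "C \<ge> 0" "\<And>k. BB s p k \<le> C"
    and v: "v \<noteq> 0"
  shows "pnorm p (Mmat s *v v) / pnorm p v \<le> C powr (1/p)"
proof -
  define G where "G = (\<Sum>k\<in>UNIV. \<bar>v$k\<bar> powr p)"
  have "(\<Sum>k\<in>UNIV. \<bar>(Mmat s *v v) $ k\<bar> powr p) \<le> (\<Sum>k\<in>UNIV. BB s p k * \<bar>v$k\<bar> powr p)"
    using main_sum[OF s] p by simp
  also have "\<dots> \<le> (\<Sum>k\<in>UNIV. C * \<bar>v$k\<bar> powr p)"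
    using C by (intro sum_mono mult_right_mono) auto
  also have "\<dots> = C * G" unfolding G_def by (simp add: sum_distrib_left)
  finally have h: "(\<Sum>k\<in>UNIV. \<bar>(Mmat s *v v) $ k\<bar> powr p) \<le> C * G" .
  have G0: "G \<ge> 0" unfolding G_def by (simp add: sum_nonneg)
  have "pnorm p (Mmat s *v v) \<le> (C * G) powr (1/p)"
    unfolding pnorm_def using h p by (intro powr_mono2) (auto simp: sum_nonneg)
  also have "\<dots> = C powr (1/p) * pnorm p v"
    unfolding pnorm_def G_def[symmetric] using C G0 by (simp add: powr_mult)
  finally have "pnorm p (Mmat s *v v) \<le> C powr (1/p) * pnorm p v" .
  moreover have "pnorm p v > 0" using pnorm_pos[OF v] p by simp
  ultimately show ?thesis by (simp add: pos_divide_le_eq)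
qed

lemma Sup_bound:
  fixes s :: "real^'n"
  assumes s: "s \<in> prob_simplex" and p: "p > 1" and C: "C \<ge> 0" "\<And>k. BB s p k \<le> C"
  shows "op_pnorm p (Mmat s) \<le> C powr (1/p)"
  unfolding op_pnorm_def
proof (rule cSup_least)
  have "(\<chi> i. (1::real)) \<noteq> (0::real^'n)" by (simp add: vec_eq_iff)
  then show "{pnorm p (Mmat s *v v) / pnorm p v |v. v \<noteq> 0} \<noteq> {}" by blast
next
  fix x assume "x \<in> {pnorm p (Mmat s *v v) / pnorm p v |v. v \<noteq> 0}"
  then obtain v where "v \<noteq> 0" "x = pnorm p (Mmat s *v v) / pnorm p v" by auto
  then show "x \<le> C powr (1/p)" using ratio_bound[OF s p C] by simp
qed

lemma half_root:
  assumes "p > 0" shows "((2::real) powr (- p)) powr (1/p) = 1/2"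
proof -
  have "((2::real) powr (- p)) powr (1/p) = 2 powr (- p * (1/p))" by (rule powr_powr)
  also have "- p * (1/p) = -1" using assms by simp
  finally show ?thesis by (simp add: powr_minus)
qed


lemma special_witness:
  fixes s :: "real^'n"
  assumes s: "s \<in> prob_simplex" and p: "p > 1" and sp: "special s"
  shows "1/2 \<in> {pnorm p (Mmat s *v v) / pnorm p v |v. v \<noteq> 0}"
proof -
  obtain i j where ij: "i \<noteq> j" "s$i = 1/2" "s$j = 1/2" "\<forall>k. k \<noteq> i \<and> k \<noteq> j \<longrightarrow> s$k = 0"
    using sp unfolding special_def by blast
  define v :: "real^'n" where "v = (\<chi> l. if l = i then 1 else if l = j then -1 else 0)"
  have v0: "v \<noteq> 0" unfolding v_def by (auto simp: vec_eq_iff)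
  have "(\<Sum>l\<in>UNIV. s$l * v$l) = (\<Sum>l\<in>UNIV. (if l = i then 1/2 else 0) - (if l = j then 1/2 else 0))"
    using ij by (intro sum.cong) (auto simp: v_def)
  also have "\<dots> = 0" by (simp add: sum_subtractf)
  finally have m: "(\<Sum>l\<in>UNIV. s$l * v$l) = 0" .
  have Mv: "Mmat s *v v = (1/2) *\<^sub>R v"
    unfolding vec_eq_iff Mv2 m using ij by (auto simp: v_def)
  have "pnorm p (Mmat s *v v) / pnorm p v = 1/2"
    unfolding Mv pnorm_scale[OF order.strict_trans[OF zero_less_one p]]
    using pnorm_pos[OF v0, of p] p by simp
  then show ?thesis using v0 by force
qed

theorem lemma4:
  fixes s :: "real^'n" and p :: real
  assumes "CARD('n) > 2" and "1 < p" and "s \<in> prob_simplex"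
  shows "op_pnorm p (Mmat s) = 1/2 \<longleftrightarrow>
    (\<exists>i j. i \<noteq> j \<and> s $ i = 1/2 \<and> s $ j = 1/2 \<and> (\<forall>k. k \<noteq> i \<and> k \<noteq> j \<longrightarrow> s $ k = 0))"
proof -
  note s = assms(3) and p = assms(2)
  have p0: "p > 0" using p by simp
  show ?thesis unfolding special_def[symmetric]
  proof
    assume sp: "special s"
    show "op_pnorm p (Mmat s) = 1/2"
      unfolding op_pnorm_def
    proof (rule cSup_eq_maximum)
      show "1/2 \<in> {pnorm p (Mmat s *v v) / pnorm p v |v. v \<noteq> 0}"
        by (rule special_witness[OF s p sp])
    next
      fix x assume "x \<in> {pnorm p (Mmat s *v v) / pnorm p v |v. v \<noteq> 0}"
      then obtain v where "v \<noteq> 0" "x = pnorm p (Mmat s *v v) / pnorm p v" by auto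
      then show "x \<le> 1/2"
        using ratio_bound[OF s p _ BB_le(1)[OF s p], of v] half_root[OF p0] by simp
    qed
  next
    assume h: "op_pnorm p (Mmat s) = 1/2"
    show "special s"
    proof (rule ccontr)
      assume ns: "\<not> special s"
      define C where "C = Max (range (BB s p))"
      have Clt: "C < 2 powr (- p)" unfolding C_def
        using BB_lt[OF s p ns] by (subst Max_less_iff) auto
      have Cge: "\<And>k. BB s p k \<le> C" unfolding C_def by (intro Max_ge) auto
      have C0: "C \<ge> 0" using BB_le(2)[OF s p] Cge by (meson order_trans)
      have "op_pnorm p (Mmat s) \<le> C powr (1/p)" by (rule Sup_bound[OF s p C0 Cge])
      also have "\<dots> < (2 powr (- p)) powr (1/p)"
        using C0 Clt p0 by (intro powr_less_mono2) auto
      also have "\<dots> = 1/2" by (rule half_root[OF p0])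
      finally show False using h by simp
    qed
  qed
qed

end
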